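(* Let $A\in\mathbb{R}^{m\times m}$ with $S_{\max}(A)>0$, $B\in\mathbb{R}^{m\times n}$, $k>0$, and let $P$ be a symmetric positive definite solution of $A^{\mathrm T}P+PA-2PBB^{\mathrm T}P+kI_m=0$. Let $x_g\in\mathbb{R}^m$ with $\|x_g\|\le\overline{x}_g$, and let $d:[0,\infty)\to\mathbb{R}^m$ be continuous with $\|d(t)\|\le\overline{d}$ for all $t\ge0$. Let $0=t_0<t_1<t_2<\cdots$ be servicing instants with $t_s\to\infty$. Consider the system $$\dot x(t)=Ax(t)+Bu(t)+d(t),\qquad u(t)=B^{\mathrm T}P\,(x_g-\hat x(t)),$$ $$\dot{\hat x}(t)=-A(x_g-\hat x(t))+Bu(t)\ \text{ for } t\in[t_s,t_{s+1}),\qquad \hat x(t_s)=x(t_s)\ \text{ for all } s\ge0,$$ with $x$ continuous and $\hat x$ right-continuous, and define $e(t)=x_g-x(t)$. Let $V_T>0$, $\kappa=S_{\max}(A)\overline{x}_g+\overline{d}$, and suppose that for every $s\ge0$, $$t_{s+1}-t_s\le\frac{1}{S_{\max}(A)}\ln\!\left(\frac{V_TS_{\max}(A)}{\kappa}+1\right).$$ Then, with $\rho\triangleq 2\overline{d}S_{\max}(P)+2V_TS_{\max}(PBB^{\mathrm T}P)+2S_{\max}(PA)\overline{x}_g$, for all $t\ge0$, $$\|e(t)\|\le\frac{\lambda_{\max}(P)\rho}{\lambda_{\min}(P)k}\left(1-e^{-\frac{k}{2\lambda_{\max}(P)}t}\right)+\sqrt{\frac{\lambda_{\max}(P)}{\lambda_{\min}(P)}}\,\|e(0)\|\,e^{-\frac{k}{2\lambda_{\max}(P)}t};$$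 moreover $e$, $x_g-\hat x$ and $u$ are bounded on $[0,\infty)$. *)

theory Defs
  imports "HOL-Analysis.Analysis"
begin

definition eigvals :: "real^'m^'m \<Rightarrow> real set" where
  "eigvals M = {c. \<exists>v. v \<noteq> 0 \<and> M *v v = c *s v}"

definition lambda_max :: "real^'m^'m \<Rightarrow> real" where
  "lambda_max M = Max (eigvals M)"

definition lambda_min :: "real^'m^'m \<Rightarrow> real" where
  "lambda_min M = Min (eigvals M)"

definition smax :: "real^'n^'m \<Rightarrow> real" where
  "smax M = sqrt (lambda_max (transpose M ** M))"

definition pos_def :: "real^'m^'m \<Rightarrow> bool" where
  "pos_def P \<longleftrightarrow> transpose P = P \<and> (\<forall>v. v \<noteq> 0 \<longrightarrow> v \<bullet> (P *v v) > 0)"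

end

theory Submission
  imports Defs
begin


lemma vd_inner:
  assumes "(f has_vector_derivative f') (at x within s)" "(g has_vector_derivative g') (at x within s)"
  shows "((\<lambda>x. f x \<bullet> g x) has_real_derivative (f x \<bullet> g' + f' \<bullet> g x)) (at x within s)"
  using has_derivative_inner[OF assms[unfolded has_vector_derivative_def]]
  unfolding has_field_derivative_def
  by (rule has_derivative_eq_rhs) (auto simp: algebra_simps fun_eq_iff)

lemma rayleigh_max:
  fixes M :: "real^'m^'m"
  assumes sa: "\<And>v w. (M *v v) \<bullet> w = v \<bullet> (M *v w)"
  shows "\<exists>v. norm v = 1 \<and> (\<forall>w. w \<bullet> (M *v w) \<le> (v \<bullet> (M *v v)) * (w \<bullet> w)) \<and> M *v v = (v \<bullet> (M *v v)) *\<^sub>R v"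
proof -
  have "continuous_on (sphere 0 1) (\<lambda>v. v \<bullet> (M *v v))"
    by (intro continuous_intros continuous_on_compose2[OF linear_continuous_on[OF matrix_vector_mul_bounded_linear]]) auto
  moreover have "sphere (0::real^'m) 1 \<noteq> {}" by simp
  ultimately obtain v where v: "v \<in> sphere 0 1" and vmax: "\<And>y. y \<in> sphere 0 1 \<Longrightarrow> y \<bullet> (M *v y) \<le> v \<bullet> (M *v v)"
    using continuous_attains_sup[OF compact_sphere] by blast
  define c where "c = v \<bullet> (M *v v)"
  have nv: "norm v = 1" using v by simp
  have vv: "v \<bullet> v = 1" using nv by (simp add: norm_eq_1)
  have bnd: "w \<bullet> (M *v w) \<le> c * (w \<bullet> w)" for w
  proof (cases "w = 0")
    case True then show ?thesis by simp
  next
    case False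
    let ?y = "(1 / norm w) *\<^sub>R w"
    have "?y \<in> sphere 0 1" using False by simp
    hence "?y \<bullet> (M *v ?y) \<le> c" using vmax c_def by blast
    also have "?y \<bullet> (M *v ?y) = (w \<bullet> (M *v w)) / (norm w)^2"
      by (simp add: matrix_vector_mult_scaleR power2_eq_square)
    finally have "w \<bullet> (M *v w) \<le> c * (norm w)^2" using False by (simp add: divide_le_eq mult.commute)
    thus ?thesis by (simp add: power2_norm_eq_inner)
  qed
  define w where "w = M *v v - c *\<^sub>R v"
  define p where "p = w \<bullet> w"
  define Q where "Q = c * (w \<bullet> w) - w \<bullet> (M *v w)"
  have Q0: "Q \<ge> 0" using bnd Q_def by simp
  have key: "2 * t * p \<le> t^2 * Q" for t :: real
  proof -
    define X where "X = w \<bullet> (M *v v)"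
    define Y where "Y = w \<bullet> (M *v w)"
    define Z where "Z = w \<bullet> v"
    define W where "W = w \<bullet> w"
    have e1: "(v + t *\<^sub>R w) \<bullet> (M *v (v + t *\<^sub>R w)) = c + 2 * t * X + t^2 * Y"
      using sa[of w v] inner_commute[of "M *v w" v]
      by (simp add: matrix_vector_right_distrib matrix_vector_mult_scaleR
            inner_add_left inner_add_right c_def X_def Y_def power2_eq_square algebra_simps)
    have e2: "(v + t *\<^sub>R w) \<bullet> (v + t *\<^sub>R w) = 1 + 2 * t * Z + t^2 * W"
      using vv by (simp add: inner_add_left inner_add_right inner_commute Z_def W_def power2_eq_square algebra_simps)
    have "c + 2 * t * X + t^2 * Y \<le> c * (1 + 2 * t * Z + t^2 * W)"
      using bnd[of "v + t *\<^sub>R w"] e1 e2 by simp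
    moreover have "p = w \<bullet> (M *v v - c *\<^sub>R v)" by (simp add: p_def w_def[symmetric])
    hence "p = X - c * Z" unfolding X_def Z_def by (simp add: inner_diff_right)
    ultimately have "c + 2 * t * (p + c * Z) + t^2 * Y \<le> c * (1 + 2 * t * Z + t^2 * W)" by simp
    thus ?thesis unfolding Q_def W_def[symmetric] Y_def[symmetric]
      by (simp add: algebra_simps)
  qed
  have "p = 0"
  proof (rule ccontr)
    assume "p \<noteq> 0"
    hence pp: "p > 0" unfolding p_def by (simp add: order_le_neq_trans)
    define t where "t = p / (Q + 1)"
    have tp: "t > 0" unfolding t_def using pp Q0 by simp
    have "t * (2 * p) \<le> t * (t * Q)" using key[of t] by (simp add: power2_eq_square algebra_simps)
    hence h1: "2 * p \<le> t * Q" using tp by simp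
    have "t * Q = p * Q / (Q + 1)" unfolding t_def by simp
    also have "... < p" using pp Q0 by (simp add: divide_less_eq)
    finally show False using h1 pp by linarith
  qed
  hence "w = 0" unfolding p_def by simp
  hence "M *v v = c *\<^sub>R v" unfolding w_def by simp
  thus ?thesis using nv bnd c_def by blast
qed

lemma sym_sa:
  fixes M :: "real^'m^'m"
  assumes "transpose M = M" shows "(M *v v) \<bullet> w = v \<bullet> (M *v w)"
  by (metis assms transpose_matrix_vector dot_lmul_matrix)

lemma eig_finite:
  fixes M :: "real^'m^'m"
  assumes sym: "transpose M = M" shows "finite (eigvals M)"
proof -
  define f where "f c = (SOME v. v \<noteq> 0 \<and> M *v v = c *\<^sub>R v)" for c
  have fc: "f c \<noteq> 0 \<and> M *v f c = c *\<^sub>R f c" if "c \<in> eigvals M" for c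
  proof -
    from that obtain v where "v \<noteq> 0 \<and> M *v v = c *\<^sub>R v" unfolding eigvals_def by (auto simp: scalar_mult_eq_scaleR)
    then show ?thesis unfolding f_def by (rule someI)
  qed
  have orth: "f c1 \<bullet> f c2 = 0" if "c1 \<in> eigvals M" "c2 \<in> eigvals M" "c1 \<noteq> c2" for c1 c2
  proof -
    have "c1 * (f c1 \<bullet> f c2) = (M *v f c1) \<bullet> f c2" using fc[OF that(1)] by simp
    also have "... = f c1 \<bullet> (M *v f c2)" by (rule sym_sa[OF sym])
    also have "... = c2 * (f c1 \<bullet> f c2)" using fc[OF that(2)] by simp
    finally show ?thesis using that(3) by simp
  qed
  have inj: "inj_on f (eigvals M)"
  proof (rule inj_onI)
    fix c1 c2 assume h: "c1 \<in> eigvals M" "c2 \<in> eigvals M" "f c1 = f c2"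
    show "c1 = c2"
    proof (rule ccontr)
      assume "c1 \<noteq> c2"
      hence "f c1 \<bullet> f c1 = 0" using orth[OF h(1,2)] h(3) by simp
      thus False using fc[OF h(1)] by simp
    qed
  qed
  have "pairwise orthogonal (f ` eigvals M)"
    unfolding pairwise_def orthogonal_def using orth by auto
  moreover have "0 \<notin> f ` eigvals M" using fc by auto
  ultimately have "independent (f ` eigvals M)" by (rule pairwise_orthogonal_independent)
  hence "finite (f ` eigvals M)" using independent_bound by blast
  thus ?thesis using finite_imageD inj by blast
qed

lemma lmax:
  fixes M :: "real^'m^'m"
  assumes sym: "transpose M = M"
  shows "w \<bullet> (M *v w) \<le> lambda_max M * (w \<bullet> w)" "\<exists>v. norm v = 1 \<and> v \<bullet> (M *v v) = lambda_max M"
proof -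
  obtain v where v: "norm v = 1" "\<forall>w. w \<bullet> (M *v w) \<le> (v \<bullet> (M *v v)) * (w \<bullet> w)"
     "M *v v = (v \<bullet> (M *v v)) *\<^sub>R v"
    using rayleigh_max[of M, OF sym_sa[OF sym]] by blast
  define c where "c = v \<bullet> (M *v v)"
  have "c \<in> eigvals M" unfolding eigvals_def using v c_def
    by (auto simp: scalar_mult_eq_scaleR intro!: exI[of _ v])
  moreover have "c' \<le> c" if "c' \<in> eigvals M" for c'
  proof -
    from that obtain u where u: "u \<noteq> 0" "M *v u = c' *\<^sub>R u" unfolding eigvals_def by (auto simp: scalar_mult_eq_scaleR)
    have "c' * (u \<bullet> u) \<le> c * (u \<bullet> u)" using v(2) u(2) c_def by (metis inner_scaleR_right)
    moreover have "u \<bullet> u > 0" using u(1) by simp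
    ultimately show ?thesis by simp
  qed
  ultimately have "lambda_max M = c" unfolding lambda_max_def
    by (intro Max_eqI eig_finite sym) auto
  thus "w \<bullet> (M *v w) \<le> lambda_max M * (w \<bullet> w)" "\<exists>v. norm v = 1 \<and> v \<bullet> (M *v v) = lambda_max M"
    using v c_def by auto
qed

lemma lmin:
  fixes M :: "real^'m^'m"
  assumes sym: "transpose M = M"
  shows "lambda_min M * (w \<bullet> w) \<le> w \<bullet> (M *v w)" "\<exists>v. norm v = 1 \<and> v \<bullet> (M *v v) = lambda_min M"
proof -
  define N where "N = (-1::real) *\<^sub>R M"
  have Nv: "N *v x = - (M *v x)" for x unfolding N_def scaleR_matrix_vector_assoc[symmetric] by simp
  have saN: "(N *v v) \<bullet> w = v \<bullet> (N *v w)" for v w using sym_sa[OF sym, of v w] by (simp add: Nv)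
  obtain v where v: "norm v = 1" "\<forall>w. w \<bullet> (N *v w) \<le> (v \<bullet> (N *v v)) * (w \<bullet> w)"
     "N *v v = (v \<bullet> (N *v v)) *\<^sub>R v"
    using rayleigh_max[of N, OF saN] by blast
  define c where "c = v \<bullet> (M *v v)"
  have v2: "\<forall>w. c * (w \<bullet> w) \<le> w \<bullet> (M *v w)" using v(2) by (simp add: Nv c_def)
  have v3: "M *v v = c *\<^sub>R v" using v(3) by (simp add: Nv c_def)
  have "c \<in> eigvals M" unfolding eigvals_def using v v3
    by (auto simp: scalar_mult_eq_scaleR intro!: exI[of _ v])
  moreover have "c \<le> c'" if "c' \<in> eigvals M" for c'
  proof -
    from that obtain u where u: "u \<noteq> 0" "M *v u = c' *\<^sub>R u" unfolding eigvals_def by (auto simp: scalar_mult_eq_scaleR)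
    have "c * (u \<bullet> u) \<le> c' * (u \<bullet> u)" using v2 u(2) by (metis inner_scaleR_right)
    moreover have "u \<bullet> u > 0" using u(1) by simp
    ultimately show ?thesis by simp
  qed
  ultimately have "lambda_min M = c" unfolding lambda_min_def
    by (intro Min_eqI eig_finite sym) auto
  thus "lambda_min M * (w \<bullet> w) \<le> w \<bullet> (M *v w)" "\<exists>v. norm v = 1 \<and> v \<bullet> (M *v v) = lambda_min M"
    using v v2 c_def by auto
qed

lemma smax_bound:
  fixes M :: "real^'n^'m"
  shows "norm (M *v v) \<le> smax M * norm v" "smax M \<ge> 0"
proof -
  define S where "S = transpose M ** M"
  have sym: "transpose S = S" unfolding S_def by (simp add: matrix_transpose_mul)
  have q: "w \<bullet> (S *v w) = (M *v w) \<bullet> (M *v w)" for w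
    unfolding S_def
    by (metis matrix_vector_mul_assoc transpose_matrix_vector dot_lmul_matrix inner_commute)
  obtain u where u: "norm u = 1" "u \<bullet> (S *v u) = lambda_max S" using lmax(2)[OF sym] by blast
  have l0: "lambda_max S \<ge> 0" using u(2) q[of u] by (metis inner_ge_zero)
  have "(norm (M *v v))^2 \<le> lambda_max S * (norm v)^2"
    using lmax(1)[OF sym, of v] q[of v] by (simp add: power2_norm_eq_inner)
  hence "sqrt ((norm (M *v v))^2) \<le> sqrt (lambda_max S * (norm v)^2)" by (rule real_sqrt_le_mono)
  thus "norm (M *v v) \<le> smax M * norm v" unfolding smax_def S_def[symmetric] using l0
    by (simp add: real_sqrt_mult)
  show "smax M \<ge> 0" unfolding smax_def S_def[symmetric] using l0 by simp
qed

lemma mv_diff: "(M::real^'n^'m) *v (x - y) = M *v x - M *v y"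
  by (simp add: vec_eq_iff matrix_vector_mult_def sum_subtractf algebra_simps)
lemma mv_neg: "(M::real^'n^'m) *v (- x) = - (M *v x)"
  by (simp add: vec_eq_iff matrix_vector_mult_def sum_negf)
lemma mv_zero: "(M::real^'n^'m) *v 0 = 0"
  by (simp add: vec_eq_iff matrix_vector_mult_def)
lemma zero_mv: "(0::real^'n^'m) *v x = 0"
  by (simp add: vec_eq_iff matrix_vector_mult_def)

lemma within_to_at:
  assumes "(f has_vector_derivative f') (at y within {a..<b})" "a < y" "y < b"
  shows "(f has_vector_derivative f') (at y)"
proof -
  have "at y within {a..<b} = at y"
    by (rule at_within_open_subset[of y "{a<..<b}"]) (use assms in auto)
  thus ?thesis using assms(1) by simp
qed

lemma cont_piece:
  assumes "\<forall>y\<in>{a..<b}. (f has_vector_derivative f' y) (at y within {a..<b})"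
  shows "continuous_on {a..<b} f"
  using assms has_vector_derivative_continuous continuous_on_eq_continuous_within by blast

lemma cmp:
  fixes f f' :: "real \<Rightarrow> real"
  assumes ab: "a \<le> b" and cont: "continuous_on {a..b} f"
    and der: "\<And>y. a < y \<Longrightarrow> y < b \<Longrightarrow> (f has_real_derivative f' y) (at y)"
    and bnd: "\<And>y. a < y \<Longrightarrow> y < b \<Longrightarrow> f' y \<le> c * f y + \<beta>" and c: "c \<noteq> 0"
  shows "(f b + \<beta>/c) * exp (-c*b) \<le> (f a + \<beta>/c) * exp (-c*a)"
proof -
  let ?G = "\<lambda>y. (f y + \<beta>/c) * exp (-c*y)"
  show ?thesis
  proof (rule DERIV_nonpos_imp_decreasing_open[OF ab, of ?G])
    fix y assume y: "a < y" "y < b"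
    have "(?G has_real_derivative (f' y * exp (-c*y) + (f y + \<beta>/c) * (exp (-c*y) * (-c)))) (at y)"
      using der[OF y] by (intro derivative_eq_intros) auto
    moreover have "f' y * exp (-c*y) + (f y + \<beta>/c) * (exp (-c*y) * (-c)) = exp (-c*y) * (f' y - c * f y - \<beta>)"
      using c by (simp add: field_simps)
    moreover have "exp (-c*y) * (f' y - c * f y - \<beta>) \<le> 0"
      using bnd[OF y] by (simp add: mult_nonneg_nonpos)
    ultimately show "\<exists>D. (?G has_real_derivative D) (at y) \<and> D \<le> 0" by auto
  next
    show "continuous_on {a..b} ?G" by (intro continuous_intros cont)
  qed
qed

lemma sqrt_deriv:
  assumes "(q has_real_derivative q') (at y)" "q y + e > 0"
  shows "((\<lambda>y. sqrt (q y + e)) has_real_derivative q' / (2 * sqrt (q y + e))) (at y)"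
proof -
  have "((\<lambda>y. q y + e) has_real_derivative q') (at y)" using assms(1) by (intro derivative_eq_intros) auto
  from DERIV_chain2[OF DERIV_real_sqrt[OF assms(2)] this]
  show ?thesis by (simp add: field_simps)
qed

lemma z_bound:
  fixes z w :: "real \<Rightarrow> real^'m" and A :: "real^'m^'m"
  assumes der: "\<forall>y\<in>{a0..<b0}. (z has_vector_derivative (A *v z y - w y)) (at y within {a0..<b0})"
    and z0: "z a0 = 0"
    and wb: "\<forall>y\<in>{a0..<b0}. norm (w y) \<le> \<kappa>"
    and a: "smax A > 0"
    and tau: "\<tau> \<in> {a0..<b0}"
  shows "norm (z \<tau>) \<le> \<kappa> / smax A * (exp (smax A * (\<tau> - a0)) - 1)"
proof -
  define a where "a = smax A"
  have a0: "a > 0" using a a_def by simp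
  define E where "E = exp (a * (\<tau> - a0))"
  have E0: "E > 0" unfolding E_def by simp
  have zc: "continuous_on {a0..<b0} z" using cont_piece[OF der] .
  have key: "norm (z \<tau>) \<le> (\<epsilon> + \<kappa>/a) * E - \<kappa>/a" if ep: "\<epsilon> > 0" for \<epsilon>
  proof -
    define h where "h y = sqrt (z y \<bullet> z y + \<epsilon>^2)" for y
    have hpos: "h y > 0" for y unfolding h_def using ep by (simp add: add_nonneg_pos)
    have hz: "norm (z y) \<le> h y" for y unfolding h_def
      by (rule real_le_rsqrt) (simp add: power2_norm_eq_inner)
    define f' where "f' y = (z y \<bullet> (A *v z y - w y) + (A *v z y - w y) \<bullet> z y) / (2 * h y)" for y
    have "(h \<tau> + \<kappa>/a) * exp (-a*\<tau>) \<le> (h a0 + \<kappa>/a) * exp (-a*a0)"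
    proof (rule cmp[where f' = f'])
      show "a0 \<le> \<tau>" using tau by simp
      have "continuous_on {a0..\<tau>} z" using zc by (rule continuous_on_subset) (use tau in auto)
      thus "continuous_on {a0..\<tau>} h" unfolding h_def by (intro continuous_intros)
      show "a \<noteq> 0" using a0 by simp
    next
      fix y assume y: "a0 < y" "y < \<tau>"
      have yi: "y \<in> {a0..<b0}" using y tau by auto
      have zd: "(z has_vector_derivative (A *v z y - w y)) (at y)"
        using within_to_at[OF der[rule_format, OF yi]] y tau by auto
      have "((\<lambda>y. z y \<bullet> z y) has_real_derivative (z y \<bullet> (A *v z y - w y) + (A *v z y - w y) \<bullet> z y)) (at y)"
        by (rule vd_inner[OF zd zd])
      from sqrt_deriv[OF this, of "\<epsilon>^2"]
      show "(h has_real_derivative f' y) (at y)" unfolding h_def f'_def using ep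
        by (simp add: add_nonneg_pos h_def[symmetric])
      have nzd: "norm (A *v z y - w y) \<le> a * norm (z y) + \<kappa>"
        unfolding a_def using norm_triangle_ineq4[of "A *v z y" "w y"] smax_bound(1)[of A "z y"] wb[rule_format, OF yi] by linarith
      have "z y \<bullet> (A *v z y - w y) \<le> norm (z y) * norm (A *v z y - w y)" by (rule norm_cauchy_schwarz)
      also have "... \<le> norm (z y) * (a * norm (z y) + \<kappa>)" by (rule mult_left_mono[OF nzd]) simp
      also have "... \<le> h y * (a * h y + \<kappa>)"
      proof -
        have k0: "\<kappa> \<ge> 0" using wb yi norm_ge_zero order_trans by blast
        show ?thesis using hz[of y] a0 k0 hpos[of y] by (intro mult_mono add_mono mult_left_mono) auto
      qed
      finally have "z y \<bullet> (A *v z y - w y) \<le> h y * (a * h y + \<kappa>)" .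
      hence "z y \<bullet> (A *v z y - w y) / h y \<le> a * h y + \<kappa>" using hpos[of y] by (simp add: divide_le_eq mult.commute)
      thus "f' y \<le> a * h y + \<kappa>" unfolding f'_def by (simp add: inner_commute)
    qed
    moreover have "h a0 = \<epsilon>" unfolding h_def z0 using ep by simp
    ultimately have "(h \<tau> + \<kappa>/a) * exp (-a*\<tau>) \<le> (\<epsilon> + \<kappa>/a) * exp (-a*a0)" by simp
    hence "(h \<tau> + \<kappa>/a) * exp (-a*\<tau>) * exp (a * \<tau>) \<le> (\<epsilon> + \<kappa>/a) * exp (-a*a0) * exp (a * \<tau>)"
      by (rule mult_right_mono) simp
    hence "h \<tau> + \<kappa>/a \<le> (\<epsilon> + \<kappa>/a) * E"
      unfolding E_def by (simp add: mult.assoc flip: exp_add) (simp add: algebra_simps)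
    thus ?thesis using hz[of \<tau>] by simp
  qed
  have "norm (z \<tau>) \<le> \<kappa> / a * (E - 1)"
  proof (rule field_le_epsilon)
    fix e :: real assume e: "e > 0"
    have "norm (z \<tau>) \<le> (e / E + \<kappa>/a) * E - \<kappa>/a" using key[of "e / E"] e E0 by simp
    moreover have "(e / E + \<kappa>/a) * E - \<kappa>/a = \<kappa> / a * (E - 1) + e" using E0 a0 by (simp add: field_simps)
    ultimately show "norm (z \<tau>) \<le> \<kappa> / a * (E - 1) + e" by simp
  qed
  thus ?thesis unfolding E_def a_def .
qed

lemma Vdot_bound:
  fixes A P :: "real^'m^'m" and B :: "real^'n^'m" and ee xx xg dd zz :: "real^'m" and uu :: "real^'n"
  assumes Psym: "transpose P = P"
    and Ric: "transpose A ** P + P ** A - 2 *\<^sub>R (P ** B ** transpose B ** P) + k *\<^sub>R mat 1 = 0"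
    and xg: "norm xg \<le> xgbar" and dd: "norm dd \<le> dbar" and zz: "norm zz \<le> VT"
    and uu: "uu = transpose B *v (P *v (ee - zz))" and xx: "xx = xg - ee"
  shows "ee \<bullet> (P *v (-(A *v xx + B *v uu + dd))) + (-(A *v xx + B *v uu + dd)) \<bullet> (P *v ee)
     \<le> - k * (norm ee)^2 + (2 * dbar * smax P + 2 * VT * smax (P ** B ** transpose B ** P)
                            + 2 * smax (P ** A) * xgbar) * norm ee"
proof -
  define N where "N = P ** B ** transpose B ** P"
  have Nv: "N *v v = P *v (B *v (transpose B *v (P *v v)))" for v
    unfolding N_def by (simp add: matrix_vector_mul_assoc matrix_mul_assoc)
  have PAv: "(P ** A) *v v = P *v (A *v v)" for v by (simp add: matrix_vector_mul_assoc)
  define x' where "x' = A *v xx + B *v uu + dd"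
  have sw: "(- x') \<bullet> (P *v ee) = ee \<bullet> (P *v (- x'))"
    using sym_sa[OF Psym, of "- x'" ee] by (simp add: inner_commute)
  have ric: "ee \<bullet> (transpose A *v (P *v ee)) + ee \<bullet> (P *v (A *v ee)) - 2 * (ee \<bullet> (N *v ee)) + k * (ee \<bullet> ee) = 0"
  proof -
    have "(transpose A ** P + P ** A - 2 *\<^sub>R N + k *\<^sub>R mat 1) *v ee = 0" using Ric N_def by (simp add: zero_mv)
    hence "transpose A *v (P *v ee) + P *v (A *v ee) - 2 *\<^sub>R (N *v ee) + k *\<^sub>R ee = 0"
      by (simp add: matrix_vector_mult_add_rdistrib matrix_vector_mult_diff_rdistrib
          scaleR_matrix_vector_assoc[symmetric] matrix_vector_mul_assoc)
    hence "ee \<bullet> (transpose A *v (P *v ee) + P *v (A *v ee) - 2 *\<^sub>R (N *v ee) + k *\<^sub>R ee) = 0" by simp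
    thus ?thesis by (simp add: inner_add_right inner_diff_right)
  qed
  have at: "ee \<bullet> (transpose A *v (P *v ee)) = ee \<bullet> (P *v (A *v ee))"
    by (metis transpose_matrix_vector dot_lmul_matrix inner_commute sym_sa[OF Psym])
  have PBu: "P *v (B *v uu) = N *v ee - N *v zz" unfolding uu Nv by (simp add: mv_diff)
  have PAx: "P *v (A *v xx) = P *v (A *v xg) - P *v (A *v ee)" unfolding xx by (simp add: mv_diff)
  have main: "ee \<bullet> (P *v (- x')) + (- x') \<bullet> (P *v ee) =
     - k * (ee \<bullet> ee) - 2 * (ee \<bullet> ((P ** A) *v xg)) + 2 * (ee \<bullet> (N *v zz)) - 2 * (ee \<bullet> (P *v dd))"
  proof -
    have "ee \<bullet> (P *v (- x')) = - (ee \<bullet> (P *v (A *v xx))) - ee \<bullet> (P *v (B *v uu)) - ee \<bullet> (P *v dd)"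
      unfolding x'_def by (simp add: mv_neg mv_diff matrix_vector_right_distrib inner_add_right inner_diff_right)
    also have "... = - (ee \<bullet> (P *v (A *v xg))) + ee \<bullet> (P *v (A *v ee)) - ee \<bullet> (N *v ee) + ee \<bullet> (N *v zz) - ee \<bullet> (P *v dd)"
      unfolding PBu PAx by (simp add: inner_diff_right)
    finally show ?thesis unfolding sw PAv using ric at by linarith
  qed
  have b1: "ee \<bullet> (N *v zz) \<le> norm ee * (smax N * VT)"
  proof -
    have "ee \<bullet> (N *v zz) \<le> norm ee * norm (N *v zz)" by (rule norm_cauchy_schwarz)
    also have "norm (N *v zz) \<le> smax N * VT"
      using smax_bound(1)[of N zz] smax_bound(2)[of N] zz by (meson mult_left_mono order_trans)
    hence "norm ee * norm (N *v zz) \<le> norm ee * (smax N * VT)" by (rule mult_left_mono) simp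
    finally show ?thesis .
  qed
  have b2: "- (ee \<bullet> ((P ** A) *v xg)) \<le> norm ee * (smax (P ** A) * xgbar)"
  proof -
    have "- (ee \<bullet> ((P ** A) *v xg)) = ee \<bullet> (- ((P ** A) *v xg))" by simp
    also have "... \<le> norm ee * norm ((P ** A) *v xg)" using norm_cauchy_schwarz by (metis norm_minus_cancel)
    also have "norm ((P ** A) *v xg) \<le> smax (P ** A) * xgbar"
      using smax_bound(1)[of "P ** A" xg] smax_bound(2)[of "P ** A"] xg by (meson mult_left_mono order_trans)
    hence "norm ee * norm ((P ** A) *v xg) \<le> norm ee * (smax (P ** A) * xgbar)" by (rule mult_left_mono) simp
    finally show ?thesis .
  qed
  have b3: "- (ee \<bullet> (P *v dd)) \<le> norm ee * (smax P * dbar)"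
  proof -
    have "- (ee \<bullet> (P *v dd)) = ee \<bullet> (- (P *v dd))" by simp
    also have "... \<le> norm ee * norm (P *v dd)" using norm_cauchy_schwarz by (metis norm_minus_cancel)
    also have "norm (P *v dd) \<le> smax P * dbar"
      using smax_bound(1)[of P dd] smax_bound(2)[of P] dd by (meson mult_left_mono order_trans)
    hence "norm ee * norm (P *v dd) \<le> norm ee * (smax P * dbar)" by (rule mult_left_mono) simp
    finally show ?thesis .
  qed
  have "ee \<bullet> ee = (norm ee)^2" by (simp add: power2_norm_eq_inner)
  thus ?thesis using main b1 b2 b3 unfolding x'_def N_def[symmetric]
    by (simp add: algebra_simps)
qed

lemma W_bound:
  fixes V V' n lmn lmx k \<rho> \<delta> :: real
  assumes V': "V' \<le> - k * n^2 + \<rho> * n" and l1: "lmn * n^2 \<le> V" and l2: "V \<le> lmx * n^2"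
    and pos: "lmn > 0" "lmx > 0" "k > 0" "\<rho> \<ge> 0" "\<delta> > 0" "n \<ge> 0"
  shows "V' / (2 * sqrt (V + \<delta>^2)) \<le> -(k / (2 * lmx)) * sqrt (V + \<delta>^2) + (\<rho> / (2 * sqrt lmn) + (k / (2 * lmx)) * \<delta>)"
proof -
  define W where "W = sqrt (V + \<delta>^2)"
  define c0 where "c0 = k / (2 * lmx)"
  define b0 where "b0 = \<rho> / (2 * sqrt lmn)"
  have V0: "V \<ge> 0" using l1 pos by (smt (verit) mult_nonneg_nonneg zero_le_power2)
  have W2: "W^2 = V + \<delta>^2" unfolding W_def using V0 by simp
  have Wd: "W \<ge> \<delta>" unfolding W_def using V0 pos by (simp add: real_le_rsqrt)
  have W0: "W > 0" using Wd pos by simp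
  have c00: "c0 > 0" unfolding c0_def using pos by simp
  have t1: "- k * n^2 \<le> - (2 * c0) * V"
  proof -
    have "k * V \<le> k * (lmx * n^2)" using l2 pos by simp
    hence "k * V / lmx \<le> k * n^2" using pos by (simp add: divide_le_eq mult.commute mult.left_commute)
    thus ?thesis unfolding c0_def using pos by (simp add: field_simps)
  qed
  have t2: "\<rho> * n \<le> 2 * b0 * W"
  proof -
    have "sqrt lmn * n = sqrt (lmn * n^2)" using pos by (simp add: real_sqrt_mult)
    also have "... \<le> sqrt V" using l1 by simp
    also have "... \<le> W" unfolding W_def by simp
    finally have "sqrt lmn * n \<le> W" .
    hence "n \<le> W / sqrt lmn" using pos by (simp add: le_divide_eq mult.commute)
    hence "\<rho> * n \<le> \<rho> * (W / sqrt lmn)" using pos(4) by (rule mult_left_mono)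
    thus ?thesis unfolding b0_def by simp
  qed
  have "V' \<le> - (2 * c0) * V + 2 * b0 * W" using V' t1 t2 by linarith
  hence "V' / (2 * W) \<le> (- (2 * c0) * V + 2 * b0 * W) / (2 * W)" using W0 by (simp add: divide_right_mono)
  also have "... = - c0 * W + c0 * (\<delta>^2 / W) + b0"
  proof -
    have "V = W * W - \<delta> * \<delta>" using W2 by (simp add: power2_eq_square)
    hence "(- (2 * c0) * V + 2 * b0 * W) / (2 * W) = (- (2 * c0) * (W * W - \<delta> * \<delta>) + 2 * b0 * W) / (2 * W)" by simp
    also have "... = - c0 * W + c0 * (\<delta>^2 / W) + b0" using W0 by (simp add: field_simps power2_eq_square)
    finally show ?thesis .
  qed
  also have "c0 * (\<delta>^2 / W) \<le> c0 * \<delta>"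
  proof -
    have "\<delta>^2 / W \<le> \<delta>" using W0 Wd pos by (simp add: divide_le_eq power2_eq_square mult_left_mono)
    thus ?thesis using c00 by (intro mult_left_mono) auto
  qed
  finally show ?thesis unfolding W_def[symmetric] c0_def[symmetric] b0_def[symmetric] by linarith
qed



theorem theorem3:
  fixes A :: "real^'m^'m" and B :: "real^'n^'m" and P :: "real^'m^'m"
    and k xgbar dbar VT :: real
    and xg :: "real^'m" and d x xhat :: "real \<Rightarrow> real^'m" and u :: "real \<Rightarrow> real^'n"
    and t :: "nat \<Rightarrow> real"
  assumes SA: "smax A > 0"
    and k: "k > 0"
    and Ppd: "pos_def P"
    and Ric: "transpose A ** P + P ** A - 2 *\<^sub>R (P ** B ** transpose B ** P) + k *\<^sub>R mat 1 = 0"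
    and xg: "norm xg \<le> xgbar"
    and dcont: "continuous_on {0..} d"
    and dbd: "\<forall>\<tau>\<ge>0. norm (d \<tau>) \<le> dbar"
    and t0: "t 0 = 0" and tmono: "strict_mono t" and tinf: "filterlim t at_top sequentially"
    and xcont: "continuous_on {0..} x"
    and xode: "\<forall>s. \<forall>\<tau>\<in>{t s..<t (Suc s)}.
        (x has_vector_derivative (A *v x \<tau> + B *v u \<tau> + d \<tau>)) (at \<tau> within {t s..<t (Suc s)})"
    and uctrl: "\<forall>\<tau>\<ge>0. u \<tau> = transpose B *v (P *v (xg - xhat \<tau>))"
    and xhode: "\<forall>s. \<forall>\<tau>\<in>{t s..<t (Suc s)}.
        (xhat has_vector_derivative (- (A *v (xg - xhat \<tau>)) + B *v u \<tau>)) (at \<tau> within {t s..<t (Suc s)})"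
    and reset: "\<forall>s. xhat (t s) = x (t s)"
    and VT: "VT > 0"
    and dwell: "\<forall>s. smax A * xgbar + dbar > 0 \<longrightarrow>
        t (Suc s) - t s \<le> (1 / smax A) * ln (VT * smax A / (smax A * xgbar + dbar) + 1)"
  shows "(\<forall>\<tau>\<ge>0. norm (xg - x \<tau>) \<le>
            lambda_max P * (2 * dbar * smax P + 2 * VT * smax (P ** B ** transpose B ** P)
                            + 2 * smax (P ** A) * xgbar) / (lambda_min P * k)
              * (1 - exp (- (k / (2 * lambda_max P)) * \<tau>))
          + sqrt (lambda_max P / lambda_min P) * norm (xg - x 0) * exp (- (k / (2 * lambda_max P)) * \<tau>))
       \<and> bounded ((\<lambda>\<tau>. xg - x \<tau>) ` {0..})
       \<and> bounded ((\<lambda>\<tau>. xg - xhat \<tau>) ` {0..})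
       \<and> bounded (u ` {0..})"
proof -
  have Psym: "transpose P = P" using Ppd unfolding pos_def_def by auto
  obtain v1 where v1: "norm v1 = 1" "v1 \<bullet> (P *v v1) = lambda_min P" using lmin(2)[OF Psym] by blast
  have lmn: "lambda_min P > 0" using Ppd v1 unfolding pos_def_def by (metis norm_zero zero_neq_one)
  have "v1 \<bullet> (P *v v1) \<le> lambda_max P * (v1 \<bullet> v1)" by (rule lmax(1)[OF Psym])
  hence lmx: "lambda_max P \<ge> lambda_min P" using v1 by (simp add: norm_eq_1[symmetric] power2_norm_eq_inner[symmetric])
  have dbar0: "dbar \<ge> 0" using dbd[rule_format, of 0] norm_ge_zero[of "d 0"] by linarith
  have xgbar0: "xgbar \<ge> 0" using xg norm_ge_zero[of xg] by linarith
  define a where "a = smax A"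
  have a0: "a > 0" using SA a_def by simp
  define \<kappa> where "\<kappa> = a * xgbar + dbar"
  have k0: "\<kappa> \<ge> 0" unfolding \<kappa>_def using a0 xgbar0 dbar0 by simp
  have tge: "t s \<ge> 0" for s using t0 monoD[OF strict_mono_mono[OF tmono], of 0 s] by simp
  have tlt: "t s < t (Suc s)" for s using tmono by (simp add: strict_mono_def)
  have finds: "\<exists>s. t s \<le> \<tau> \<and> \<tau> < t (Suc s)" if tau: "\<tau> \<ge> 0" for \<tau>
  proof -
    have "eventually (\<lambda>n. \<tau> + 1 \<le> t n) sequentially" using tinf unfolding filterlim_at_top by blast
    then obtain n where "\<tau> + 1 \<le> t n" by (auto simp: eventually_sequentially)
    hence ex: "\<tau> < t n" by simp
    define m where "m = (LEAST n. \<tau> < t n)"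
    have tm: "\<tau> < t m" unfolding m_def using ex by (rule LeastI)
    have "m \<noteq> 0" using tm t0 tau by (metis not_less)
    then obtain s where ms: "m = Suc s" by (cases m) auto
    have "\<not> \<tau> < t s" unfolding m_def[symmetric] using not_less_Least[of s "\<lambda>n. \<tau> < t n"] ms m_def by auto
    thus ?thesis using tm ms by (intro exI[of _ s]) auto
  qed
  define z where "z = (\<lambda>\<tau>. xhat \<tau> - x \<tau>)"
  have zb: "norm (z \<tau>) \<le> VT" if tau: "\<tau> \<ge> 0" for \<tau>
  proof -
    obtain s where s: "t s \<le> \<tau>" "\<tau> < t (Suc s)" using finds[OF tau] by blast
    have der: "\<forall>y\<in>{t s..<t (Suc s)}. (z has_vector_derivative (A *v z y - (A *v xg + d y))) (at y within {t s..<t (Suc s)})"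
    proof
      fix y assume y: "y \<in> {t s..<t (Suc s)}"
      from has_vector_derivative_diff[OF xhode[rule_format, OF y] xode[rule_format, OF y]]
      show "(z has_vector_derivative (A *v z y - (A *v xg + d y))) (at y within {t s..<t (Suc s)})"
        unfolding z_def by (rule has_vector_derivative_eq_rhs) (simp add: mv_diff algebra_simps)
    qed
    have wb: "\<forall>y\<in>{t s..<t (Suc s)}. norm (A *v xg + d y) \<le> \<kappa>"
    proof
      fix y assume y: "y \<in> {t s..<t (Suc s)}"
      have "y \<ge> 0" using y tge[of s] by auto
      hence "norm (d y) \<le> dbar" using dbd by blast
      moreover have "norm (A *v xg) \<le> a * xgbar"
        using smax_bound(1)[of A xg] xg a0 a_def by (meson mult_left_mono order_trans less_imp_le)
      ultimately show "norm (A *v xg + d y) \<le> \<kappa>" unfolding \<kappa>_def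
        using norm_triangle_ineq[of "A *v xg" "d y"] by linarith
    qed
    have zz: "z (t s) = 0" unfolding z_def using reset by simp
    have zle: "norm (z \<tau>) \<le> \<kappa> / a * (exp (a * (\<tau> - t s)) - 1)"
      using z_bound[OF der zz wb SA] s unfolding a_def by auto
    show ?thesis
    proof (cases "\<kappa> = 0")
      case True thus ?thesis using zle VT by simp
    next
      case False
      hence kp: "\<kappa> > 0" using k0 by simp
      have "t (Suc s) - t s \<le> (1 / a) * ln (VT * a / \<kappa> + 1)" using dwell kp unfolding \<kappa>_def a_def by blast
      hence h1: "a * (t (Suc s) - t s) \<le> ln (VT * a / \<kappa> + 1)" using a0 by (simp add: field_simps)
      have h2: "a * (\<tau> - t s) \<le> a * (t (Suc s) - t s)" using a0 s by (intro mult_left_mono) auto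
      from h1 h2 have "a * (\<tau> - t s) \<le> ln (VT * a / \<kappa> + 1)" by linarith
      hence "exp (a * (\<tau> - t s)) \<le> VT * a / \<kappa> + 1"
        using kp a0 VT by (metis exp_le_cancel_iff exp_ln add_pos_pos divide_pos_pos mult_pos_pos zero_less_one)
      hence "\<kappa> / a * (exp (a * (\<tau> - t s)) - 1) \<le> \<kappa> / a * (VT * a / \<kappa>)"
        using kp a0 by (intro mult_left_mono) auto
      also have "... = VT" using kp a0 by simp
      finally show ?thesis using zle by simp
    qed
  qed
  define L where "L = lambda_max P"
  define l where "l = lambda_min P"
  define \<rho> where "\<rho> = 2 * dbar * smax P + 2 * VT * smax (P ** B ** transpose B ** P) + 2 * smax (P ** A) * xgbar"
  define c0 where "c0 = k / (2 * L)"
  define b0 where "b0 = \<rho> / (2 * sqrt l)"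
  have l0: "l > 0" using lmn l_def by simp
  have L0: "L > 0" using lmn lmx L_def by simp
  have c00: "c0 > 0" unfolding c0_def using k L0 by simp
  have \<rho>0: "\<rho> \<ge> 0" unfolding \<rho>_def using dbar0 xgbar0 VT
    smax_bound(2)[of P] smax_bound(2)[of "P ** B ** transpose B ** P"] smax_bound(2)[of "P ** A"]
    by (intro add_nonneg_nonneg mult_nonneg_nonneg) auto
  define ee where "ee = (\<lambda>\<tau>. xg - x \<tau>)"
  define V where "V = (\<lambda>\<tau>. ee \<tau> \<bullet> (P *v ee \<tau>))"
  have Vlo: "l * (norm (ee y))^2 \<le> V y" for y
    using lmin(1)[OF Psym, of "ee y"] unfolding V_def l_def by (simp add: power2_norm_eq_inner)
  have Vhi: "V y \<le> L * (norm (ee y))^2" for y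
    using lmax(1)[OF Psym, of "ee y"] unfolding V_def L_def by (simp add: power2_norm_eq_inner)
  have V0: "V y \<ge> 0" for y using Vlo[of y] l0 by (smt (verit) mult_nonneg_nonneg zero_le_power2)
  have eec: "continuous_on {0..} ee" unfolding ee_def by (intro continuous_intros xcont)
  have key: "sqrt l * norm (ee \<tau>) \<le> (b0 / c0) * (1 - exp (- c0 * \<tau>)) + sqrt L * norm (ee 0) * exp (- c0 * \<tau>) + \<delta>"
    if tau: "\<tau> \<ge> 0" and dp: "\<delta> > 0" for \<tau> \<delta>
  proof -
    define W where "W = (\<lambda>y. sqrt (V y + \<delta>^2))"
    define \<beta> where "\<beta> = b0 + c0 * \<delta>"
    define G where "G = (\<lambda>y. (W y + \<beta> / (- c0)) * exp (- (- c0) * y))"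
    have pec: "continuous_on {0..} (\<lambda>y. P *v ee y)"
      by (rule bounded_linear.continuous_on[OF matrix_vector_mul_bounded_linear eec])
    have Wc: "continuous_on {0..} W" unfolding W_def V_def by (intro continuous_intros eec pec)
    have piece: "G b \<le> G (t s)" if b: "t s \<le> b" "b \<le> t (Suc s)" for s b
      unfolding G_def
    proof (rule cmp[where f' = "\<lambda>y. (ee y \<bullet> (P *v (-(A *v x y + B *v u y + d y))) + (-(A *v x y + B *v u y + d y)) \<bullet> (P *v ee y)) / (2 * W y)"])
      show "t s \<le> b" using b by simp
      show "continuous_on {t s..b} W" using Wc by (rule continuous_on_subset) (use tge[of s] in auto)
      show "- c0 \<noteq> 0" using c00 by simp
    next
      fix y assume y: "t s < y" "y < b"
      have yi: "y \<in> {t s..<t (Suc s)}" using y b by auto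
      have y0: "y \<ge> 0" using y tge[of s] by simp
      have xd: "(x has_vector_derivative (A *v x y + B *v u y + d y)) (at y)"
        using within_to_at[OF xode[rule_format, OF yi]] y b by auto
      have ed: "(ee has_vector_derivative (-(A *v x y + B *v u y + d y))) (at y)"
        unfolding ee_def using has_vector_derivative_diff[OF has_vector_derivative_const xd] by simp
      have ped: "((\<lambda>y. P *v ee y) has_vector_derivative (P *v (-(A *v x y + B *v u y + d y)))) (at y)"
        by (rule bounded_linear.has_vector_derivative[OF matrix_vector_mul_bounded_linear ed])
      have "(V has_real_derivative (ee y \<bullet> (P *v (-(A *v x y + B *v u y + d y))) + (-(A *v x y + B *v u y + d y)) \<bullet> (P *v ee y))) (at y)"
        unfolding V_def by (rule vd_inner[OF ed ped])
      moreover have "V y + \<delta>^2 > 0" using V0[of y] dp by (simp add: add_nonneg_pos)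
      ultimately have "((\<lambda>y. sqrt (V y + \<delta>^2)) has_real_derivative (ee y \<bullet> (P *v (-(A *v x y + B *v u y + d y))) + (-(A *v x y + B *v u y + d y)) \<bullet> (P *v ee y)) / (2 * sqrt (V y + \<delta>^2))) (at y)"
        by (rule sqrt_deriv)
      then
      show "(W has_real_derivative (ee y \<bullet> (P *v (-(A *v x y + B *v u y + d y))) + (-(A *v x y + B *v u y + d y)) \<bullet> (P *v ee y)) / (2 * W y)) (at y)"
        unfolding W_def .
      have Vd: "ee y \<bullet> (P *v (-(A *v x y + B *v u y + d y))) + (-(A *v x y + B *v u y + d y)) \<bullet> (P *v ee y)
          \<le> - k * (norm (ee y))^2 + \<rho> * norm (ee y)"
        unfolding \<rho>_def
      proof (rule Vdot_bound[OF Psym Ric xg])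
        show "norm (d y) \<le> dbar" using dbd y0 by blast
        show "norm (z y) \<le> VT" using zb[OF y0] .
        show "u y = transpose B *v (P *v (ee y - z y))" using uctrl y0 unfolding ee_def z_def by simp
        show "x y = xg - ee y" unfolding ee_def by simp
      qed
      show "(ee y \<bullet> (P *v (-(A *v x y + B *v u y + d y))) + (-(A *v x y + B *v u y + d y)) \<bullet> (P *v ee y)) / (2 * W y)
          \<le> - c0 * W y + \<beta>"
        unfolding W_def c0_def \<beta>_def b0_def
        using W_bound[OF Vd Vlo Vhi l0 L0 k \<rho>0 dp norm_ge_zero] by (simp add: L_def)
    qed
    have Gs: "G (t s) \<le> G 0" for s
    proof (induction s)
      case 0 show ?case using t0 by simp
    next
      case (Suc s) thus ?case using piece[of s "t (Suc s)"] tlt[of s] by simp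
    qed
    obtain s where s: "t s \<le> \<tau>" "\<tau> < t (Suc s)" using finds[OF tau] by blast
    have "G \<tau> \<le> G 0" using piece[of s \<tau>] s Gs[of s] by simp
    hence "(W \<tau> - \<beta> / c0) * exp (c0 * \<tau>) \<le> W 0 - \<beta> / c0" unfolding G_def by simp
    hence "(W \<tau> - \<beta> / c0) * exp (c0 * \<tau>) * exp (- c0 * \<tau>) \<le> (W 0 - \<beta> / c0) * exp (- c0 * \<tau>)"
      by (rule mult_right_mono) simp
    hence Wt: "W \<tau> - \<beta> / c0 \<le> (W 0 - \<beta> / c0) * exp (- c0 * \<tau>)"
      by (simp add: mult.assoc flip: exp_add)
    have W0: "W 0 \<le> sqrt L * norm (ee 0) + \<delta>"
    proof -
      have "W 0 \<le> sqrt (V 0) + sqrt (\<delta>^2)" unfolding W_def using sqrt_add_le_add_sqrt[of "V 0" "\<delta>^2"] V0[of 0] by simp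
      also have "sqrt (V 0) \<le> sqrt (L * (norm (ee 0))^2)" using Vhi[of 0] by simp
      also have "... = sqrt L * norm (ee 0)" using L0 by (simp add: real_sqrt_mult)
      finally show ?thesis using dp by simp
    qed
    have Wlo: "sqrt l * norm (ee \<tau>) \<le> W \<tau>"
    proof -
      have "sqrt l * norm (ee \<tau>) = sqrt (l * (norm (ee \<tau>))^2)" using l0 by (simp add: real_sqrt_mult)
      also have "... \<le> sqrt (V \<tau>)" using Vlo[of \<tau>] by simp
      also have "... \<le> W \<tau>" unfolding W_def using dp by simp
      finally show ?thesis .
    qed
    define E where "E = exp (- c0 * \<tau>)"
    have E0: "E > 0" "E \<le> 1" unfolding E_def using c00 tau by auto
    have "W \<tau> \<le> \<beta> / c0 * (1 - E) + W 0 * E" using Wt unfolding E_def by (simp add: algebra_simps)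
    also have "... \<le> \<beta> / c0 * (1 - E) + (sqrt L * norm (ee 0) + \<delta>) * E"
      using W0 E0 by (intro add_left_mono mult_right_mono) auto
    also have "\<beta> / c0 = b0 / c0 + \<delta>" unfolding \<beta>_def using c00 by (simp add: field_simps)
    finally have "W \<tau> \<le> (b0 / c0 + \<delta>) * (1 - E) + (sqrt L * norm (ee 0) + \<delta>) * E" .
    hence "W \<tau> \<le> b0 / c0 * (1 - E) + sqrt L * norm (ee 0) * E + \<delta>" by (simp add: algebra_simps)
    thus ?thesis using Wlo unfolding E_def by simp
  qed
  have bnd: "norm (ee \<tau>) \<le> L * \<rho> / (l * k) * (1 - exp (- c0 * \<tau>)) + sqrt (L / l) * norm (ee 0) * exp (- c0 * \<tau>)"
    if tau: "\<tau> \<ge> 0" for \<tau>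
  proof -
    define E where "E = exp (- c0 * \<tau>)"
    have sl: "sqrt l > 0" using l0 by simp
    have "sqrt l * norm (ee \<tau>) \<le> (b0 / c0) * (1 - E) + sqrt L * norm (ee 0) * E"
      using key[OF tau] unfolding E_def by (rule field_le_epsilon)
    hence "norm (ee \<tau>) \<le> ((b0 / c0) * (1 - E) + sqrt L * norm (ee 0) * E) / sqrt l"
      using sl by (simp add: le_divide_eq mult.commute)
    also have "... = (b0 / c0 / sqrt l) * (1 - E) + (sqrt L / sqrt l) * norm (ee 0) * E"
      by (simp add: add_divide_distrib)
    also have "b0 / c0 / sqrt l = L * \<rho> / (l * k)"
    proof -
      have "sqrt l * sqrt l = l" using l0 by simp
      thus ?thesis unfolding b0_def c0_def using l0 L0 k sl by (simp add: field_simps)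
    qed
    also have "sqrt L / sqrt l = sqrt (L / l)" by (simp add: real_sqrt_divide)
    finally show ?thesis unfolding E_def .
  qed
  have eb: "norm (ee \<tau>) \<le> L * \<rho> / (l * k) + sqrt (L / l) * norm (ee 0)" if tau: "\<tau> \<ge> 0" for \<tau>
  proof -
    have E0: "exp (- c0 * \<tau>) > 0" "exp (- c0 * \<tau>) \<le> 1" using c00 tau by auto
    have C1: "L * \<rho> / (l * k) \<ge> 0" using L0 \<rho>0 l0 k by simp
    have "L * \<rho> / (l * k) * (1 - exp (- c0 * \<tau>)) \<le> L * \<rho> / (l * k)"
      using mult_left_le[of "1 - exp (- c0 * \<tau>)" "L * \<rho> / (l * k)"] C1 E0 by simp
    moreover have "sqrt (L / l) * norm (ee 0) * exp (- c0 * \<tau>) \<le> sqrt (L / l) * norm (ee 0)"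
      using mult_left_le[of "exp (- c0 * \<tau>)" "sqrt (L / l) * norm (ee 0)"] E0 L0 l0 by simp
    ultimately show ?thesis using bnd[OF tau] by linarith
  qed
  have b1: "bounded ((\<lambda>\<tau>. xg - x \<tau>) ` {0..})"
    unfolding bounded_iff using eb unfolding ee_def by auto
  have b2: "bounded ((\<lambda>\<tau>. xg - xhat \<tau>) ` {0..})"
  proof -
    have "norm (xg - xhat \<tau>) \<le> L * \<rho> / (l * k) + sqrt (L / l) * norm (ee 0) + VT" if tau: "\<tau> \<ge> 0" for \<tau>
    proof -
      have "xg - xhat \<tau> = ee \<tau> - z \<tau>" unfolding ee_def z_def by simp
      hence "norm (xg - xhat \<tau>) \<le> norm (ee \<tau>) + norm (z \<tau>)" by (simp add: norm_triangle_ineq4)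
      thus ?thesis using eb[OF tau] zb[OF tau] by linarith
    qed
    thus ?thesis unfolding bounded_iff by auto
  qed
  have b3: "bounded (u ` {0..})"
  proof -
    have "u ` {0..} = (\<lambda>v. transpose B *v (P *v v)) ` ((\<lambda>\<tau>. xg - xhat \<tau>) ` {0..})"
      using uctrl by (auto simp: image_image intro!: image_cong)
    moreover have "bounded_linear (\<lambda>v. transpose B *v (P *v v))"
      by (rule bounded_linear_compose[OF matrix_vector_mul_bounded_linear matrix_vector_mul_bounded_linear])
    ultimately show ?thesis using bounded_linear_image[OF b2] by simp
  qed
  show ?thesis using bnd b1 b2 b3 unfolding ee_def L_def l_def \<rho>_def c0_def by simp
qed

end
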